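(* Let $(G,k)$ be an instance of \textsc{Bicolored $P_3$ Deletion} and let $e_1,e_2,e_3$ be three distinct edges of $G$ such that $e_1$ forms a bicolored $P_3$ with $e_2$ and $e_1$ forms a bicolored $P_3$ with $e_3$. Then $(G,k)$ is a yes-instance if and only if $(G-e_1,k-1)$ is a yes-instance or $(G-\{e_2,e_3\},k-2)$ is a yes-instance.
   Context: A two-colored graph $G=(V,E_r,E_b)$ is a finite simple undirected graph whose edge set $E=E_r\uplus E_b$ is partitioned into red and blue edges. A bicolored $P_3$ is an induced subgraph on three vertices $u,v,w$ with edges $\{u,v\},\{v,w\}$ of different colors and $\{u,w\}\notin E$; these two edges are said to form a bicolored $P_3$. \textsc{Bicolored $P_3$ Deletion}: given $G$ and an integer $k$, decide whether some $S\subseteq E$ with $|S|\le k$ makes $G-S$ free of induced bicolored $P_3$s (no-instance if $k<0$). *)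

theory Defs
  imports Main
begin

definition two_colored_graph :: "'a set \<Rightarrow> 'a set set \<Rightarrow> 'a set set \<Rightarrow> bool" where
  "two_colored_graph V Er Eb \<longleftrightarrow> finite V \<and> Er \<inter> Eb = {} \<and>
     (\<forall>e \<in> Er \<union> Eb. \<exists>u v. e = {u, v} \<and> u \<noteq> v \<and> u \<in> V \<and> v \<in> V)"

definition forms_bicolored_P3 :: "'a set set \<Rightarrow> 'a set set \<Rightarrow> 'a set \<Rightarrow> 'a set \<Rightarrow> bool" where
  "forms_bicolored_P3 Er Eb e f \<longleftrightarrow>
     (\<exists>u v w. u \<noteq> v \<and> v \<noteq> w \<and> u \<noteq> w \<and> e = {u, v} \<and> f = {v, w} \<and>
        ((e \<in> Er \<and> f \<in> Eb) \<or> (e \<in> Eb \<and> f \<in> Er)) \<and> {u, w} \<notin> Er \<union> Eb)"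

definition bicolored_P3_free :: "'a set set \<Rightarrow> 'a set set \<Rightarrow> bool" where
  "bicolored_P3_free Er Eb \<longleftrightarrow> (\<forall>e f. \<not> forms_bicolored_P3 Er Eb e f)"

definition yes_instance :: "'a set \<Rightarrow> 'a set set \<Rightarrow> 'a set set \<Rightarrow> int \<Rightarrow> bool" where
  "yes_instance V Er Eb k \<longleftrightarrow> k \<ge> 0 \<and>
     (\<exists>S. S \<subseteq> Er \<union> Eb \<and> int (card S) \<le> k \<and> bicolored_P3_free (Er - S) (Eb - S))"

end

theory Submission
  imports Defs
begin

lemma P3_keep:
  assumes "forms_bicolored_P3 Er Eb e f" "e \<notin> S" "f \<notin> S"
  shows "forms_bicolored_P3 (Er - S) (Eb - S) e f"
proof -
  obtain u v w where h: "u \<noteq> v" "v \<noteq> w" "u \<noteq> w" "e = {u, v}" "f = {v, w}"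
     "(e \<in> Er \<and> f \<in> Eb) \<or> (e \<in> Eb \<and> f \<in> Er)" "{u, w} \<notin> Er \<union> Eb"
    using assms(1) unfolding forms_bicolored_P3_def by blast
  have "(e \<in> Er - S \<and> f \<in> Eb - S) \<or> (e \<in> Eb - S \<and> f \<in> Er - S)" using h(6) assms(2,3) by blast
  moreover have "{u, w} \<notin> (Er - S) \<union> (Eb - S)" using h(7) by blast
  ultimately show ?thesis unfolding forms_bicolored_P3_def using h(1-5) by blast
qed

lemma fin_edges:
  assumes "two_colored_graph V Er Eb"
  shows "finite (Er \<union> Eb)"
proof -
  have "Er \<union> Eb \<subseteq> Pow V"
  proof
    fix e assume "e \<in> Er \<union> Eb"
    then obtain u v where "e = {u, v}" "u \<in> V" "v \<in> V" using assms unfolding two_colored_graph_def by meson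
    then show "e \<in> Pow V" by simp
  qed
  moreover have "finite (Pow V)" using assms unfolding two_colored_graph_def by simp
  ultimately show ?thesis by (rule finite_subset)
qed
lemma yesI:
  assumes "k \<ge> 0" "S \<subseteq> Er \<union> Eb" "int (card S) \<le> k" "bicolored_P3_free (Er - S) (Eb - S)"
  shows "yes_instance V Er Eb k"
  unfolding yes_instance_def using assms by (intro conjI exI[of _ S]) 

theorem lemma5:
  fixes V :: "'a set" and Er Eb :: "'a set set" and k :: int and e1 e2 e3 :: "'a set"
  assumes "two_colored_graph V Er Eb"
    and "e1 \<in> Er \<union> Eb" and "e2 \<in> Er \<union> Eb" and "e3 \<in> Er \<union> Eb"
    and "e1 \<noteq> e2" and "e1 \<noteq> e3" and "e2 \<noteq> e3"
    and "forms_bicolored_P3 Er Eb e1 e2"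
    and "forms_bicolored_P3 Er Eb e1 e3"
  shows "yes_instance V Er Eb k \<longleftrightarrow>
           (yes_instance V (Er - {e1}) (Eb - {e1}) (k - 1) \<or>
            yes_instance V (Er - {e2, e3}) (Eb - {e2, e3}) (k - 2))"
proof
  have fin: "finite (Er \<union> Eb)" using fin_edges[OF assms(1)] .
  assume "yes_instance V Er Eb k"
  then obtain S where S: "S \<subseteq> Er \<union> Eb" "int (card S) \<le> k" "bicolored_P3_free (Er - S) (Eb - S)"
    unfolding yes_instance_def by blast
  have fS: "finite S" using S(1) by (intro finite_subset[OF _ fin]) blast
  show "yes_instance V (Er - {e1}) (Eb - {e1}) (k - 1) \<or>
            yes_instance V (Er - {e2, e3}) (Eb - {e2, e3}) (k - 2)"
  proof (cases "e1 \<in> S")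
    case True
    have c: "card (S - {e1}) = card S - 1" using True fS by simp
    have c1: "card S \<ge> 1" using True fS by (auto simp: Suc_le_eq card_gt_0_iff)
    have q1: "Er - {e1} - (S - {e1}) = Er - S" "Eb - {e1} - (S - {e1}) = Eb - S" using True by auto
    have "yes_instance V (Er - {e1}) (Eb - {e1}) (k - 1)"
    proof (rule yesI)
      show "k - 1 \<ge> 0" using S(2) c1 by linarith
      show "S - {e1} \<subseteq> Er - {e1} \<union> (Eb - {e1})" using S(1) by blast
      show "int (card (S - {e1})) \<le> k - 1" using S(2) c c1 by linarith
      show "bicolored_P3_free (Er - {e1} - (S - {e1})) (Eb - {e1} - (S - {e1}))" unfolding q1 by (rule S(3))
    qed
    then show ?thesis by blast
  next
    case False
    have "e2 \<in> S"
    proof (rule ccontr)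
      assume "e2 \<notin> S"
      then have "forms_bicolored_P3 (Er - S) (Eb - S) e1 e2" by (rule P3_keep[OF assms(8) False])
      then show False using S(3) unfolding bicolored_P3_free_def by blast
    qed
    moreover have "e3 \<in> S"
    proof (rule ccontr)
      assume "e3 \<notin> S"
      then have "forms_bicolored_P3 (Er - S) (Eb - S) e1 e3" by (rule P3_keep[OF assms(9) False])
      then show False using S(3) unfolding bicolored_P3_free_def by blast
    qed
    ultimately have sub: "{e2, e3} \<subseteq> S" by blast
    have c2: "card {e2,e3} = 2" using assms(7) by simp
    have c: "card (S - {e2,e3}) = card S - 2" using card_Diff_subset[of "{e2,e3}" S] sub c2 by simp
    have c1: "card S \<ge> 2" using card_mono[OF fS sub] c2 by simp
    have q1: "Er - {e2,e3} - (S - {e2,e3}) = Er - S" "Eb - {e2,e3} - (S - {e2,e3}) = Eb - S" using sub by auto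
    have "yes_instance V (Er - {e2,e3}) (Eb - {e2,e3}) (k - 2)"
    proof (rule yesI)
      show "k - 2 \<ge> 0" using S(2) c1 by linarith
      show "S - {e2,e3} \<subseteq> Er - {e2,e3} \<union> (Eb - {e2,e3})" using S(1) by blast
      show "int (card (S - {e2,e3})) \<le> k - 2" using S(2) c c1 by linarith
      show "bicolored_P3_free (Er - {e2,e3} - (S - {e2,e3})) (Eb - {e2,e3} - (S - {e2,e3}))" unfolding q1 by (rule S(3))
    qed
    then show ?thesis by blast
  qed
next
  have fin: "finite (Er \<union> Eb)" using fin_edges[OF assms(1)] .
  assume "yes_instance V (Er - {e1}) (Eb - {e1}) (k - 1) \<or>
            yes_instance V (Er - {e2, e3}) (Eb - {e2, e3}) (k - 2)"
  then show "yes_instance V Er Eb k"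
  proof
    assume "yes_instance V (Er - {e1}) (Eb - {e1}) (k - 1)"
    then obtain S where S: "S \<subseteq> Er - {e1} \<union> (Eb - {e1})" "int (card S) \<le> k - 1"
      "bicolored_P3_free (Er - {e1} - S) (Eb - {e1} - S)" "k - 1 \<ge> 0"
      unfolding yes_instance_def by blast
    have fS: "finite S" using S(1) by (intro finite_subset[OF _ fin]) blast
    have ci: "card (insert e1 S) \<le> card S + 1" using fS by (simp add: card_insert_if)
    have q1: "Er - {e1} - S = Er - insert e1 S" "Eb - {e1} - S = Eb - insert e1 S" by auto
    show ?thesis
    proof (rule yesI)
      show "k \<ge> 0" using S(4) by linarith
      show "insert e1 S \<subseteq> Er \<union> Eb" using S(1) assms(2) by blast
      show "int (card (insert e1 S)) \<le> k" using S(2) ci by linarith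
      show "bicolored_P3_free (Er - insert e1 S) (Eb - insert e1 S)" by (rule S(3)[unfolded q1])
    qed
  next
    assume "yes_instance V (Er - {e2, e3}) (Eb - {e2, e3}) (k - 2)"
    then obtain S where S: "S \<subseteq> Er - {e2,e3} \<union> (Eb - {e2,e3})" "int (card S) \<le> k - 2"
      "bicolored_P3_free (Er - {e2,e3} - S) (Eb - {e2,e3} - S)" "k - 2 \<ge> 0"
      unfolding yes_instance_def by blast
    have fS: "finite S" using S(1) by (intro finite_subset[OF _ fin]) blast
    have "card (S \<union> {e2,e3}) \<le> card S + card {e2,e3}" by (rule card_Un_le)
    then have ci: "card (S \<union> {e2,e3}) \<le> card S + 2" using assms(7) by simp
    have q1: "Er - {e2,e3} - S = Er - (S \<union> {e2,e3})" "Eb - {e2,e3} - S = Eb - (S \<union> {e2,e3})" by auto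
    show ?thesis
    proof (rule yesI)
      show "k \<ge> 0" using S(4) by linarith
      show "S \<union> {e2,e3} \<subseteq> Er \<union> Eb" using S(1) assms(3,4) by blast
      show "int (card (S \<union> {e2,e3})) \<le> k" using S(2) ci by linarith
      show "bicolored_P3_free (Er - (S \<union> {e2,e3})) (Eb - (S \<union> {e2,e3}))" by (rule S(3)[unfolded q1])
    qed
  qed
qed

end
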